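(* Let $n$ be a positive integer, let $T_d\in\mathbb{R}^{n\times n}$ be a symmetric positive definite matrix (in the application, a $d$-level Toeplitz matrix), and let $D_d\in\mathbb{R}^{n\times n}$ be a diagonal matrix with nonnegative diagonal entries. Consider the real non-symmetric positive definite block linear system $\mathcal{R}_d x=f$ with $$\mathcal{R}_d=\begin{bmatrix} I & T_d-D_d\\ D_d-T_d & I\end{bmatrix}\in\mathbb{R}^{2n\times 2n},$$ and its splitting $\mathcal{R}_d=\mathcal{T}_d+\mathcal{D}_d$ with $$\mathcal{T}_d=\begin{bmatrix} 0 & T_d\\ -T_d & 0\end{bmatrix},\qquad \mathcal{D}_d=\begin{bmatrix} I & -D_d\\ D_d & I\end{bmatrix}.$$ Let $\omega>0$. For an arbitrary initial vector $x^{(0)}\in\mathbb{R}^{2n}$, define the iteration (the TBAN iteration) $$(\omega I+\mathcal{T}_d)x^{(k+\frac12)}=(\omega I-\mathcal{D}_d)x^{(k)}+f,\qquad (\omega I+\mathcal{D}_d)x^{(k+1)}=(\omega I-\mathcal{T}_d)x^{(k+\frac12)}+f,\quad k=0,1,2,\dots$$ Then the sequence $\{x^{(k)}\}_{k\ge0}$ converges to the unique solution of $\mathcal{R}_d x=f$. Moreover, with $$\mathcal{F}_{d,\omega}=\tfrac{1}{2\omega}(\omega I+\mathcal{T}_d)(\omega I+\mathcal{D}_d),\quad \mathcal{G}_{d,\omega}=\tfrac{1}{2\omega}(\omega I-\mathcal{T}_d)(\omega I-\mathcal{D}_d),\quad \mathcal{L}_{d,\omega}=\mathcal{F}_{d,\omega}^{-1}\mathcal{G}_{d,\omega},$$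 the spectral radius of the iteration matrix satisfies $$\rho(\mathcal{L}_{d,\omega})\le \sigma(\omega)<1\quad\text{for all }\omega>0,\qquad \sigma(\omega)=\sqrt{\frac{(\omega-1)^2+\lambda_{\max}^2}{(\omega+1)^2+\lambda_{\max}^2}},$$ where $\lambda_{\max}$ is the maximum diagonal entry of $D_d$.
   Context: This arises from writing a complex linear system $(D_d-T_d+\imath I)\mathbf{u}=\mathbf{b}$ with $\mathbf{u}=y+\imath z$, $\mathbf{b}=p+\imath q$ in real form, $x=[z;y]$, $f=[-p;q]$. Here $I$ denotes identity matrices of the appropriate size and $\rho(\cdot)$ is the spectral radius. *)

theory Defs
  imports "HOL-Analysis.Analysis"
begin

text \<open>2x2 block matrix with blocks indexed by the sum type 'n + 'n
  (so the result is a 2n x 2n matrix when 'n has n elements).\<close>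
definition block2 ::
  "real^'n^'n \<Rightarrow> real^'n^'n \<Rightarrow> real^'n^'n \<Rightarrow> real^'n^'n \<Rightarrow> real^('n+'n)^('n+'n)" where
  "block2 A B C D = (\<chi> i j. (case i of
      Inl a \<Rightarrow> (case j of Inl b \<Rightarrow> A$a$b | Inr b \<Rightarrow> B$a$b)
    | Inr a \<Rightarrow> (case j of Inl b \<Rightarrow> C$a$b | Inr b \<Rightarrow> D$a$b)))"

definition eigenvalues :: "real^'m^'m \<Rightarrow> complex set" where
  "eigenvalues A = {l. \<exists>v::complex^'m. v \<noteq> 0 \<and>
       (\<chi> i j. complex_of_real (A$i$j)) *v v = l *s v}"

definition spectral_radius :: "real^'m^'m \<Rightarrow> real" where
  "spectral_radius A = Max (cmod ` eigenvalues A)"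


definition bigR :: "real^'n^'n \<Rightarrow> real^'n^'n \<Rightarrow> real^('n+'n)^('n+'n)" where
  "bigR T D = block2 (mat 1) (T - D) (D - T) (mat 1)"
definition bigT :: "real^'n^'n \<Rightarrow> real^('n+'n)^('n+'n)" where
  "bigT T = block2 0 T (- T) 0"
definition bigD :: "real^'n^'n \<Rightarrow> real^('n+'n)^('n+'n)" where
  "bigD D = block2 (mat 1) (- D) D (mat 1)"
definition bigF :: "real \<Rightarrow> real^'n^'n \<Rightarrow> real^'n^'n \<Rightarrow> real^('n+'n)^('n+'n)" where
  "bigF \<omega> T D = (1 / (2 * \<omega>)) *\<^sub>R ((\<omega> *\<^sub>R mat 1 + bigT T) ** (\<omega> *\<^sub>R mat 1 + bigD D))"
definition bigG :: "real \<Rightarrow> real^'n^'n \<Rightarrow> real^'n^'n \<Rightarrow> real^('n+'n)^('n+'n)" where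
  "bigG \<omega> T D = (1 / (2 * \<omega>)) *\<^sub>R ((\<omega> *\<^sub>R mat 1 - bigT T) ** (\<omega> *\<^sub>R mat 1 - bigD D))"
definition bigL :: "real \<Rightarrow> real^'n^'n \<Rightarrow> real^'n^'n \<Rightarrow> real^('n+'n)^('n+'n)" where
  "bigL \<omega> T D = matrix_inv (bigF \<omega> T D) ** bigG \<omega> T D"

end

theory Submission imports Defs "Jordan_Normal_Form.Char_Poly" begin
hide_const (open) Matrix.mat
no_notation Matrix.scalar_prod (infix "\<bullet>" 70)
no_notation Matrix.vec_index (infixl "$" 100)

lemma eigenvalues_fin_ne:
  fixes A :: "real^'m^'m"
  shows "finite (eigenvalues A) \<and> eigenvalues A \<noteq> {}"
proof -
  define n where "n = CARD('m)"
  obtain h where h: "bij_betw h {0..<n} (UNIV::'m set)"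
    using ex_bij_betw_nat_finite[of "UNIV::'m set"] unfolding n_def by auto
  define g where "g = inv_into {0..<n} h"
  have hg: "\<And>k. h (g k) = k" "\<And>k. g k < n"
  proof -
    fix k
    show "h (g k) = k" using h unfolding g_def bij_betw_def by (auto intro: f_inv_into_f)
  next
    fix k
    have "g k \<in> {0..<n}" unfolding g_def using h unfolding bij_betw_def
      by (metis UNIV_I inv_into_into)
    thus "g k < n" by simp
  qed
  have gh: "\<And>i. i < n \<Longrightarrow> g (h i) = i"
    using h unfolding g_def bij_betw_def by auto
  define B where "B = Matrix.mat n n (\<lambda>(i,j). complex_of_real (A $ h i $ h j))"
  have B: "B \<in> carrier_mat n n" unfolding B_def by simp
  have key: "l \<in> eigenvalues A \<longleftrightarrow> eigenvalue B l" for l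
  proof
    assume "l \<in> eigenvalues A"
    then obtain v :: "complex^'m" where v0: "v \<noteq> 0"
      and ev: "(\<chi> i j. complex_of_real (A$i$j)) *v v = l *s v"
      unfolding eigenvalues_def by auto
    define w where "w = Matrix.vec n (\<lambda>i. v $ h i)"
    have wc: "w \<in> carrier_vec n" unfolding w_def by simp
    obtain k where "v $ k \<noteq> 0" using v0 by (auto simp: Finite_Cartesian_Product.vec_eq_iff)
    hence "vec_index w (g k) \<noteq> 0" unfolding w_def using hg by simp
    hence w0: "w \<noteq> 0\<^sub>v n" using hg(2) by auto
    have "B *\<^sub>v w = l \<cdot>\<^sub>v w"
    proof (rule eq_vecI)
      fix i assume i: "i < dim_vec (l \<cdot>\<^sub>v w)"
      hence i: "i < n" unfolding w_def by simp
      have "vec_index (B *\<^sub>v w) i = (\<Sum>j\<in>{0..<n}. complex_of_real (A $ h i $ h j) * v $ h j)"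
        using i unfolding B_def w_def by (simp add: scalar_prod_def)
      also have "\<dots> = (\<Sum>k\<in>UNIV. complex_of_real (A $ h i $ k) * v $ k)"
        by (rule sum.reindex_bij_betw[OF h])
      also have "\<dots> = ((\<chi> i j. complex_of_real (A$i$j)) *v v) $ h i"
        by (simp add: matrix_vector_mult_def)
      also have "\<dots> = l * v $ h i" using ev by simp
      also have "\<dots> = vec_index (l \<cdot>\<^sub>v w) i" using i unfolding w_def by simp
      finally show "vec_index (B *\<^sub>v w) i = vec_index (l \<cdot>\<^sub>v w) i" .
    qed (simp add: B_def w_def)
    thus "eigenvalue B l" unfolding eigenvalue_def eigenvector_def
      using wc w0 B by auto
  next
    assume "eigenvalue B l"
    then obtain w where wc: "w \<in> carrier_vec n" and w0: "w \<noteq> 0\<^sub>v n"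
      and ev: "B *\<^sub>v w = l \<cdot>\<^sub>v w"
      unfolding eigenvalue_def eigenvector_def using B by auto
    define v :: "complex^'m" where "v = (\<chi> k. vec_index w (g k))"
    obtain i where i: "i < n" "vec_index w i \<noteq> 0" using w0 wc by (metis Matrix.eq_vecI carrier_vecD index_zero_vec(1,2))
    hence "v $ h i \<noteq> 0" unfolding v_def using gh by simp
    hence v0: "v \<noteq> 0" by auto
    have "(\<chi> i j. complex_of_real (A$i$j)) *v v = l *s v"
    proof (rule Finite_Cartesian_Product.vec_eq_iff[THEN iffD2], rule allI)
      fix k
      have "((\<chi> i j. complex_of_real (A$i$j)) *v v) $ k
          = (\<Sum>k'\<in>UNIV. complex_of_real (A $ k $ k') * vec_index w (g k'))"
        by (simp add: matrix_vector_mult_def v_def)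
      also have "\<dots> = (\<Sum>j\<in>{0..<n}. complex_of_real (A $ k $ h j) * vec_index w (g (h j)))"
        by (rule sum.reindex_bij_betw[OF h, symmetric])
      also have "\<dots> = (\<Sum>j\<in>{0..<n}. complex_of_real (A $ h (g k) $ h j) * vec_index w j)"
        using gh hg by simp
      also have "\<dots> = vec_index (B *\<^sub>v w) (g k)"
        using hg wc unfolding B_def by (simp add: scalar_prod_def)
      also have "\<dots> = l * vec_index w (g k)" using ev hg wc by simp
      also have "\<dots> = (l *s v) $ k" unfolding v_def by simp
      finally show "((\<chi> i j. complex_of_real (A$i$j)) *v v) $ k = (l *s v) $ k" .
    qed
    thus "l \<in> eigenvalues A" unfolding eigenvalues_def using v0 by auto
  qed
  have id: "eigenvalues A = {k. poly (char_poly B) k = 0}"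
    using key eigenvalue_root_char_poly[OF B] by auto
  from degree_monic_char_poly[OF B] have d: "degree (char_poly B) = n"
    and c: "coeff (char_poly B) n = 1" by auto
  from c have "char_poly B \<noteq> 0" by auto
  from poly_roots_finite[OF this] have fin: "finite (eigenvalues A)" unfolding id .
  have "n > 0" unfolding n_def by simp
  hence "degree (char_poly B) > 0" using d by simp
  hence "\<not> constant (poly (char_poly B))" by (simp add: constant_degree)
  from fundamental_theorem_of_algebra[OF this] have "eigenvalues A \<noteq> {}" unfolding id by auto
  with fin show ?thesis by simp
qed
definition skew :: "real^'k^'k \<Rightarrow> bool" where
  "skew K \<longleftrightarrow> (\<forall>i j. K$j$i = - K$i$j)"

lemma skew_quad:
  fixes K :: "real^'k^'k"
  assumes "skew K"
  shows "x \<bullet> (K *v x) = 0"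
proof -
  have s: "\<And>i j. K$j$i = - K$i$j" using assms unfolding skew_def by blast
  define S where "S = (\<Sum>i\<in>UNIV. \<Sum>j\<in>UNIV. x$i * K$i$j * x$j)"
  have e: "x \<bullet> (K *v x) = S"
    unfolding S_def inner_vec_def matrix_vector_mult_def
    by (simp add: sum_distrib_left mult.assoc)
  have "S = (\<Sum>j\<in>UNIV. \<Sum>i\<in>UNIV. x$i * K$i$j * x$j)"
    unfolding S_def by (rule sum.swap)
  also have "\<dots> = (\<Sum>j\<in>UNIV. \<Sum>i\<in>UNIV. - (x$j * K$j$i * x$i))"
  proof (intro sum.cong refl)
    fix i j
    show "x$i * K$i$j * x$j = - (x$j * K$j$i * x$i)"
      using s[of i j] by (simp add: algebra_simps)
  qed
  also have "\<dots> = - S" unfolding S_def by (simp add: sum_negf)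
  finally have "S = 0" by simp
  with e show ?thesis by simp
qed

lemma mat_act:
  fixes K :: "real^'k^'k"
  shows "(c *\<^sub>R mat 1 + K) *v x = c *\<^sub>R x + K *v x"
    and "(c *\<^sub>R mat 1 - K) *v x = c *\<^sub>R x - K *v x"
  by (simp_all add: matrix_vector_mult_add_rdistrib matrix_vector_mult_diff_rdistrib
      scaleR_matrix_vector_assoc[symmetric])

lemma skew_invertible:
  fixes K :: "real^'k^'k"
  assumes "skew K" "c \<noteq> 0"
  shows "invertible (c *\<^sub>R mat 1 + K)"
proof -
  have "\<forall>x. (c *\<^sub>R mat 1 + K) *v x = 0 \<longrightarrow> x = 0"
  proof (intro allI impI)
    fix x assume h: "(c *\<^sub>R mat 1 + K) *v x = 0"
    have "x \<bullet> ((c *\<^sub>R mat 1 + K) *v x) = c * (x \<bullet> x)"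
      using skew_quad[OF assms(1)] by (simp add: mat_act inner_add_right)
    with h assms(2) show "x = 0" by simp
  qed
  thus ?thesis
    using matrix_left_invertible_ker invertible_left_inverse by blast
qed

lemma norm_pm:
  fixes K :: "real^'k^'k"
  assumes "skew K"
  shows "(c *\<^sub>R x + K *v x) \<bullet> (c *\<^sub>R x + K *v x) = c\<^sup>2 * (x \<bullet> x) + (K *v x) \<bullet> (K *v x)"
    and "(c *\<^sub>R x - K *v x) \<bullet> (c *\<^sub>R x - K *v x) = c\<^sup>2 * (x \<bullet> x) + (K *v x) \<bullet> (K *v x)"
proof -
  have q: "x \<bullet> (K *v x) = 0" "(K *v x) \<bullet> x = 0"
    using skew_quad[OF assms] by (auto simp: inner_commute)
  show "(c *\<^sub>R x + K *v x) \<bullet> (c *\<^sub>R x + K *v x) = c\<^sup>2 * (x \<bullet> x) + (K *v x) \<bullet> (K *v x)"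
    using q by (simp add: inner_add_left inner_add_right power2_eq_square)
  show "(c *\<^sub>R x - K *v x) \<bullet> (c *\<^sub>R x - K *v x) = c\<^sup>2 * (x \<bullet> x) + (K *v x) \<bullet> (K *v x)"
    using q by (simp add: inner_diff_left inner_diff_right power2_eq_square)
qed

lemma cayley:
  fixes K :: "real^'k^'k"
  assumes "skew K" "w \<noteq> 0"
    and h: "w *\<^sub>R z + K *v z = w *\<^sub>R u - K *v u"
  shows "z \<bullet> z = u \<bullet> u"
proof -
  have "w *\<^sub>R (z - u) = - (K *v (z + u))"
    using h by (simp add: algebra_simps)
  hence "(w *\<^sub>R (z - u)) \<bullet> (z + u) = - ((K *v (z + u)) \<bullet> (z + u))" by simp
  also have "\<dots> = 0" using skew_quad[OF assms(1), of "z+u"] by (simp add: inner_commute)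
  finally have "w * ((z - u) \<bullet> (z + u)) = 0" by simp
  hence "(z - u) \<bullet> (z + u) = 0" using assms(2) by simp
  thus ?thesis by (simp add: inner_diff_left inner_diff_right inner_add_right inner_add_left inner_commute)
qed

lemma sum_UNIV_plus:
  fixes g :: "('a::finite + 'b::finite) \<Rightarrow> 'c::comm_monoid_add"
  shows "sum g UNIV = (\<Sum>a\<in>UNIV. g (Inl a)) + (\<Sum>b\<in>UNIV. g (Inr b))"
  using sum.Plus[of "UNIV::'a set" "UNIV::'b set" g] by simp

lemma block2_nth:
  "block2 A B C D $ Inl a $ Inl b = A$a$b"
  "block2 A B C D $ Inl a $ Inr b = B$a$b"
  "block2 A B C D $ Inr a $ Inl b = C$a$b"
  "block2 A B C D $ Inr a $ Inr b = D$a$b"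
  by (simp_all add: block2_def)

lemma skew_block2:
  assumes "\<And>a b. C$b$a = - B$a$b"
  shows "skew (block2 0 B C 0)"
  unfolding skew_def
proof (intro allI)
  fix i j :: "'a + 'a"
  show "block2 0 B C 0 $ j $ i = - block2 0 B C 0 $ i $ j"
    by (cases i; cases j) (simp_all add: block2_nth assms)
qed

lemma vec2_eqI:
  fixes M N :: "real^('a::finite+'a)^('a+'a)"
  assumes "\<And>a b. M$Inl a$Inl b = N$Inl a$Inl b" "\<And>a b. M$Inl a$Inr b = N$Inl a$Inr b"
    "\<And>a b. M$Inr a$Inl b = N$Inr a$Inl b" "\<And>a b. M$Inr a$Inr b = N$Inr a$Inr b"
  shows "M = N"
proof -
  have "M$i$j = N$i$j" for i j using assms by (cases i; cases j) auto
  thus ?thesis by (simp add: Finite_Cartesian_Product.vec_eq_iff)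
qed

lemma mat1_nth: "(mat 1 :: real^'k^'k) $ i $ j = (if i = j then 1 else 0)"
  by (simp add: Finite_Cartesian_Product.mat_def)

lemma bigR_split: "bigR T D = bigT T + bigD D"
  by (rule vec2_eqI) (simp_all add: bigR_def bigT_def bigD_def block2_nth)

lemma bigD_eq: "bigD D = mat 1 + block2 0 (-D) D 0"
  by (rule vec2_eqI) (simp_all add: bigD_def block2_nth mat1_nth)

lemma bigR_eq: "bigR T D = mat 1 + block2 0 (T - D) (D - T) 0"
  by (rule vec2_eqI) (simp_all add: bigR_def block2_nth mat1_nth)

lemma bigT_skew:
  assumes "transpose T = T"
  shows "skew (bigT T)"
proof -
  have "T$b$a = T$a$b" for a b
    using arg_cong[OF assms, of "\<lambda>M. M$a$b"] by (simp add: transpose_def)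
  thus ?thesis unfolding bigT_def by (intro skew_block2) simp
qed

lemma KD_skew:
  assumes "\<And>i j. i \<noteq> j \<Longrightarrow> D$i$j = 0"
  shows "skew (block2 0 (-D) D 0)"
proof -
  have "D$b$a = D$a$b" for a b using assms by (cases "a = b") auto
  thus ?thesis by (intro skew_block2) simp
qed

lemma KR_skew:
  assumes "transpose T = T" "\<And>i j. i \<noteq> j \<Longrightarrow> D$i$j = 0"
  shows "skew (block2 0 (T - D) (D - T) 0)"
proof -
  have "T$b$a = T$a$b" for a b
    using arg_cong[OF assms(1), of "\<lambda>M. M$a$b"] by (simp add: transpose_def)
  moreover have "D$b$a = D$a$b" for a b using assms by (cases "a = b") auto
  ultimately show ?thesis by (intro skew_block2) simp
qed

lemma diag_sum:
  assumes "\<And>i j. i \<noteq> j \<Longrightarrow> D$i$j = (0::real)"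
  shows "(\<Sum>b\<in>UNIV. D$a$b * v b) = D$a$a * v a"
proof -
  have "(\<Sum>b\<in>UNIV. D$a$b * v b) = (\<Sum>b\<in>UNIV. if b = a then D$a$a * v a else 0)"
    by (rule sum.cong) (auto simp: assms)
  thus ?thesis by simp
qed

lemma KD_act:
  fixes D :: "real^'a^'a"
  assumes "\<And>i j. i \<noteq> j \<Longrightarrow> D$i$j = 0"
  shows "(block2 0 (-D) D 0 *v e) $ Inl a = - (D$a$a * e$Inr a)"
    and "(block2 0 (-D) D 0 *v e) $ Inr a = D$a$a * e$Inl a"
proof -
  show "(block2 0 (-D) D 0 *v e) $ Inl a = - (D$a$a * e$Inr a)"
    unfolding matrix_vector_mult_def
    using diag_sum[OF assms, of a "\<lambda>b. e$Inr b"]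
    by (simp add: sum_UNIV_plus block2_nth sum_negf)
  show "(block2 0 (-D) D 0 *v e) $ Inr a = D$a$a * e$Inl a"
    unfolding matrix_vector_mult_def
    using diag_sum[OF assms, of a "\<lambda>b. e$Inl b"]
    by (simp add: sum_UNIV_plus block2_nth)
qed

lemma KD_bound:
  fixes D :: "real^'a^'a"
  assumes "\<And>i j. i \<noteq> j \<Longrightarrow> D$i$j = 0" "\<And>a. (D$a$a)\<^sup>2 \<le> L2"
  shows "(block2 0 (-D) D 0 *v e) \<bullet> (block2 0 (-D) D 0 *v e) \<le> L2 * (e \<bullet> e)"
proof -
  have "(block2 0 (-D) D 0 *v e) \<bullet> (block2 0 (-D) D 0 *v e)
      = (\<Sum>a\<in>UNIV. (D$a$a)\<^sup>2 * (e$Inr a)\<^sup>2) + (\<Sum>a\<in>UNIV. (D$a$a)\<^sup>2 * (e$Inl a)\<^sup>2)"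
    unfolding inner_vec_def
    by (simp add: sum_UNIV_plus KD_act[OF assms(1)] power2_eq_square mult_ac)
  also have "\<dots> \<le> (\<Sum>a\<in>UNIV. L2 * (e$Inr a)\<^sup>2) + (\<Sum>a\<in>UNIV. L2 * (e$Inl a)\<^sup>2)"
    by (intro add_mono sum_mono mult_right_mono assms(2)) simp_all
  also have "\<dots> = L2 * (e \<bullet> e)"
    unfolding inner_vec_def
    by (simp add: sum_UNIV_plus power2_eq_square sum_distrib_left algebra_simps)
  finally show ?thesis .
qed

lemma ratio_ineq:
  fixes w a b L2 :: real
  assumes "w > 0" "a \<ge> 0" "b \<ge> 0" "b \<le> L2 * a" "L2 \<ge> 0"
  shows "(w - 1)\<^sup>2 * a + b \<le> ((w - 1)\<^sup>2 + L2) / ((w + 1)\<^sup>2 + L2) * ((w + 1)\<^sup>2 * a + b)"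
proof -
  have pos: "(w + 1)\<^sup>2 + L2 > 0" using assms by (simp add: add_pos_nonneg)
  have "((w + 1)\<^sup>2 + L2) * ((w - 1)\<^sup>2 * a + b) + 4 * w * (L2 * a - b)
      = ((w - 1)\<^sup>2 + L2) * ((w + 1)\<^sup>2 * a + b)"
    by (simp add: power2_eq_square algebra_simps)
  moreover have "4 * w * (L2 * a - b) \<ge> 0" using assms by simp
  ultimately have "((w + 1)\<^sup>2 + L2) * ((w - 1)\<^sup>2 * a + b) \<le> ((w - 1)\<^sup>2 + L2) * ((w + 1)\<^sup>2 * a + b)"
    by linarith
  thus ?thesis using pos by (simp add: field_simps)
qed

lemma D_factor:
  fixes D :: "real^'a^'a"
  assumes diag: "\<And>i j. i \<noteq> j \<Longrightarrow> D$i$j = 0" and bd: "\<And>a. (D$a$a)\<^sup>2 \<le> L2"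
    and "L2 \<ge> 0" "w > 0"
  shows "((w *\<^sub>R mat 1 - bigD D) *v e) \<bullet> ((w *\<^sub>R mat 1 - bigD D) *v e)
     \<le> ((w - 1)\<^sup>2 + L2) / ((w + 1)\<^sup>2 + L2) * (((w *\<^sub>R mat 1 + bigD D) *v e) \<bullet> ((w *\<^sub>R mat 1 + bigD D) *v e))"
    and "(w + 1)\<^sup>2 * (e \<bullet> e) \<le> ((w *\<^sub>R mat 1 + bigD D) *v e) \<bullet> ((w *\<^sub>R mat 1 + bigD D) *v e)"
proof -
  define K where "K = block2 0 (-D) D 0"
  have sk: "skew K" unfolding K_def by (rule KD_skew[OF diag])
  have m1: "w *\<^sub>R mat 1 - bigD D = (w - 1) *\<^sub>R mat 1 - K"
    unfolding bigD_eq K_def by (simp add: algebra_simps)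
  have m2: "w *\<^sub>R mat 1 + bigD D = (w + 1) *\<^sub>R mat 1 + K"
    unfolding bigD_eq K_def by (simp add: algebra_simps)
  have e1: "((w *\<^sub>R mat 1 - bigD D) *v e) \<bullet> ((w *\<^sub>R mat 1 - bigD D) *v e)
     = (w - 1)\<^sup>2 * (e \<bullet> e) + (K *v e) \<bullet> (K *v e)"
    unfolding m1 mat_act by (rule norm_pm(2)[OF sk])
  have e2: "((w *\<^sub>R mat 1 + bigD D) *v e) \<bullet> ((w *\<^sub>R mat 1 + bigD D) *v e)
     = (w + 1)\<^sup>2 * (e \<bullet> e) + (K *v e) \<bullet> (K *v e)"
    unfolding m2 mat_act by (rule norm_pm(1)[OF sk])
  have b: "(K *v e) \<bullet> (K *v e) \<le> L2 * (e \<bullet> e)"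
    unfolding K_def by (rule KD_bound[OF diag bd])
  show "((w *\<^sub>R mat 1 - bigD D) *v e) \<bullet> ((w *\<^sub>R mat 1 - bigD D) *v e)
     \<le> ((w - 1)\<^sup>2 + L2) / ((w + 1)\<^sup>2 + L2) * (((w *\<^sub>R mat 1 + bigD D) *v e) \<bullet> ((w *\<^sub>R mat 1 + bigD D) *v e))"
    unfolding e1 e2 by (rule ratio_ineq) (use assms b in auto)
  show "(w + 1)\<^sup>2 * (e \<bullet> e) \<le> ((w *\<^sub>R mat 1 + bigD D) *v e) \<bullet> ((w *\<^sub>R mat 1 + bigD D) *v e)"
    unfolding e2 by simp
qed

lemma sigma_lt1:
  fixes w L2 :: real
  assumes "w > 0" "L2 \<ge> 0"
  shows "sqrt (((w - 1)\<^sup>2 + L2) / ((w + 1)\<^sup>2 + L2)) < 1"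
proof -
  have pos: "(w + 1)\<^sup>2 + L2 > 0" using assms by (simp add: add_pos_nonneg)
  have "(w - 1)\<^sup>2 + L2 < (w + 1)\<^sup>2 + L2" using assms by (simp add: power2_eq_square algebra_simps)
  hence "((w - 1)\<^sup>2 + L2) / ((w + 1)\<^sup>2 + L2) < 1" using pos by simp
  thus ?thesis by simp
qed

lemma iter_conv:
  fixes T D :: "real^'a^'a" and f xs :: "real^('a+'a)" and x xh :: "nat \<Rightarrow> real^('a+'a)"
  assumes Tsym: "transpose T = T" and diag: "\<And>i j. i \<noteq> j \<Longrightarrow> D$i$j = 0"
    and bd: "\<And>a. (D$a$a)\<^sup>2 \<le> L2" and L2: "L2 \<ge> 0" and w: "w > 0"
    and sol: "bigR T D *v xs = f"
    and h1: "\<forall>k. (w *\<^sub>R mat 1 + bigT T) *v xh k = (w *\<^sub>R mat 1 - bigD D) *v x k + f"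
    and h2: "\<forall>k. (w *\<^sub>R mat 1 + bigD D) *v x (Suc k) = (w *\<^sub>R mat 1 - bigT T) *v xh k + f"
  shows "x \<longlonglongrightarrow> xs"
proof -
  define r where "r = ((w - 1)\<^sup>2 + L2) / ((w + 1)\<^sup>2 + L2)"
  define s where "s = sqrt r"
  have r0: "r \<ge> 0" unfolding r_def using L2 by (simp add: add_nonneg_nonneg)
  have s0: "s \<ge> 0" and s1: "s < 1" and ss: "s\<^sup>2 = r"
    using sigma_lt1[OF w L2] r0 unfolding s_def r_def by auto
  have skT: "skew (bigT T)" by (rule bigT_skew[OF Tsym])
  define e where "e k = x k - xs" for k
  define e' where "e' k = xh k - xs" for k
  define g where "g k = (w *\<^sub>R mat 1 + bigD D) *v e k" for k
  have f: "f = bigT T *v xs + bigD D *v xs"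
    using sol by (simp add: bigR_split matrix_vector_mult_add_rdistrib)
  have E1: "(w *\<^sub>R mat 1 + bigT T) *v e' k = (w *\<^sub>R mat 1 - bigD D) *v e k" for k
    using h1[rule_format, of k] unfolding e_def e'_def f mat_act
    by (simp add: matrix_vector_mult_diff_distrib algebra_simps)
  have E2: "g (Suc k) = (w *\<^sub>R mat 1 - bigT T) *v e' k" for k
    using h2[rule_format, of k] unfolding g_def e_def e'_def f mat_act
    by (simp add: matrix_vector_mult_diff_distrib algebra_simps)
  have step: "norm (g (Suc k)) \<le> s * norm (g k)" for k
  proof -
    have "(norm (g (Suc k)))\<^sup>2 = ((w *\<^sub>R mat 1 - bigT T) *v e' k) \<bullet> ((w *\<^sub>R mat 1 - bigT T) *v e' k)"
      unfolding E2 by (simp add: power2_norm_eq_inner)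
    also have "\<dots> = ((w *\<^sub>R mat 1 + bigT T) *v e' k) \<bullet> ((w *\<^sub>R mat 1 + bigT T) *v e' k)"
      unfolding mat_act norm_pm[OF skT] ..
    also have "\<dots> = ((w *\<^sub>R mat 1 - bigD D) *v e k) \<bullet> ((w *\<^sub>R mat 1 - bigD D) *v e k)"
      unfolding E1 ..
    also have "\<dots> \<le> r * (g k \<bullet> g k)"
      unfolding r_def g_def by (rule D_factor(1)[OF diag bd L2 w])
    also have "\<dots> = (s * norm (g k))\<^sup>2"
      by (simp add: power_mult_distrib ss power2_norm_eq_inner)
    finally have "(norm (g (Suc k)))\<^sup>2 \<le> (s * norm (g k))\<^sup>2" .
    thus ?thesis by (rule power2_le_imp_le) (use s0 in simp)
  qed
  have gk: "norm (g k) \<le> s ^ k * norm (g 0)" for k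
  proof (induction k)
    case 0 then show ?case by simp
  next
    case (Suc k)
    have "norm (g (Suc k)) \<le> s * norm (g k)" by (rule step)
    also have "\<dots> \<le> s * (s ^ k * norm (g 0))" using Suc s0 by (intro mult_left_mono)
    finally show ?case by (simp add: mult.assoc)
  qed
  have ek: "norm (e k) \<le> s ^ k * (norm (g 0) / (w + 1))" for k
  proof -
    have "((w + 1) * norm (e k))\<^sup>2 = (w + 1)\<^sup>2 * (e k \<bullet> e k)"
      by (simp add: power_mult_distrib power2_norm_eq_inner)
    also have "\<dots> \<le> g k \<bullet> g k" unfolding g_def by (rule D_factor(2)[OF diag bd L2 w])
    also have "\<dots> = (norm (g k))\<^sup>2" by (simp add: power2_norm_eq_inner)
    finally have "(w + 1) * norm (e k) \<le> norm (g k)"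
      by (rule power2_le_imp_le) simp
    hence "(w + 1) * norm (e k) \<le> s ^ k * norm (g 0)" using gk[of k] by linarith
    thus ?thesis using w by (simp add: field_simps)
  qed
  have "(\<lambda>k. s ^ k) \<longlonglongrightarrow> 0" using s0 s1 by (intro LIMSEQ_power_zero) simp
  hence lim: "(\<lambda>k. s ^ k * (norm (g 0) / (w + 1))) \<longlonglongrightarrow> 0" by (rule tendsto_mult_left_zero)
  have ev: "\<forall>\<^sub>F k in sequentially. norm (e k) \<le> s ^ k * (norm (g 0) / (w + 1))"
    using ek by (simp add: always_eventually)
  have "e \<longlonglongrightarrow> 0" by (rule Lim_null_comparison[OF ev lim])
  hence "(\<lambda>k. e k + xs) \<longlonglongrightarrow> 0 + xs" by (intro tendsto_add tendsto_const)
  thus ?thesis unfolding e_def by simp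
qed

lemma cplx_re_im:
  fixes M :: "real^'k^'m" and v :: "complex^'k"
  shows "(\<chi> i. Re ((((\<chi> i j. complex_of_real (M$i$j)) :: complex^'k^'m) *v v) $ i)) = M *v (\<chi> i. Re (v$i))"
    and "(\<chi> i. Im ((((\<chi> i j. complex_of_real (M$i$j)) :: complex^'k^'m) *v v) $ i)) = M *v (\<chi> i. Im (v$i))"
  by (simp_all add: matrix_vector_mult_def Finite_Cartesian_Product.vec_eq_iff Re_sum Im_sum)

lemma matrix_inv_right':
  fixes A :: "real^'k^'k"
  assumes "invertible A"
  shows "A ** matrix_inv A = mat 1"
  using assms unfolding invertible_def matrix_inv_def
  by (metis (mono_tags, lifting) someI_ex)

lemma inner_rot:
  fixes x y :: "real^'k"
  shows "(p *\<^sub>R x - q *\<^sub>R y) \<bullet> (p *\<^sub>R x - q *\<^sub>R y) + (q *\<^sub>R x + p *\<^sub>R y) \<bullet> (q *\<^sub>R x + p *\<^sub>R y)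
    = (p\<^sup>2 + q\<^sup>2) * (x \<bullet> x + y \<bullet> y)"
  by (simp add: inner_diff_left inner_diff_right inner_add_left inner_add_right
      inner_commute[of y x] power2_eq_square algebra_simps)

lemma spec_bound:
  fixes T D :: "real^'a^'a"
  assumes Tsym: "transpose T = T" and diag: "\<And>i j. i \<noteq> j \<Longrightarrow> D$i$j = 0"
    and bd: "\<And>a. (D$a$a)\<^sup>2 \<le> L2" and L2: "L2 \<ge> 0" and w: "w > 0"
    and l: "l \<in> eigenvalues (bigL w T D)"
  shows "cmod l \<le> sqrt (((w - 1)\<^sup>2 + L2) / ((w + 1)\<^sup>2 + L2))"
proof -
  define r where "r = ((w - 1)\<^sup>2 + L2) / ((w + 1)\<^sup>2 + L2)"
  define L where "L = bigL w T D"
  define P1 where "P1 = w *\<^sub>R mat 1 + bigT T"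
  define P2 where "P2 = w *\<^sub>R mat 1 + bigD D"
  define Q1 where "Q1 = w *\<^sub>R mat 1 - bigT T"
  define Q2 where "Q2 = w *\<^sub>R mat 1 - bigD D"
  define c where "c = 1 / (2 * w)"
  define F where "F = bigF w T D"
  define G where "G = bigG w T D"
  have Fd: "F = c *\<^sub>R (P1 ** P2)" unfolding F_def bigF_def c_def P1_def P2_def ..
  have Gd: "G = c *\<^sub>R (Q1 ** Q2)" unfolding G_def bigG_def c_def Q1_def Q2_def ..
  have c0: "c \<noteq> 0" unfolding c_def using w by simp
  have skT: "skew (bigT T)" by (rule bigT_skew[OF Tsym])
  have skD: "skew (block2 0 (-D) D 0)" by (rule KD_skew[OF diag])
  have iP1: "invertible P1" unfolding P1_def by (rule skew_invertible[OF skT]) (use w in simp)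
  have P2e: "P2 = (w + 1) *\<^sub>R mat 1 + block2 0 (-D) D 0"
    unfolding P2_def bigD_eq by (simp add: algebra_simps)
  have iP2: "invertible P2" unfolding P2e by (rule skew_invertible[OF skD]) (use w in simp)
  have iF: "invertible F" unfolding Fd by (intro scalar_invertible c0 invertible_mult iP1 iP2)
  have FL: "F ** L = G" unfolding L_def bigL_def F_def[symmetric] G_def[symmetric]
    by (simp add: matrix_mul_assoc matrix_inv_right'[OF iF])
  from l obtain v :: "complex^('a+'a)" where v0: "v \<noteq> 0"
    and ev: "(\<chi> i j. complex_of_real (L$i$j)) *v v = l *s v"
    unfolding eigenvalues_def L_def by auto
  define a where "a = (\<chi> i. Re (v$i))"
  define b where "b = (\<chi> i. Im (v$i))"
  define p where "p = Re l"
  define q where "q = Im l"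
  have La: "L *v a = p *\<^sub>R a - q *\<^sub>R b"
  proof -
    have "L *v a = (\<chi> i. Re ((l *s v) $ i))" unfolding a_def cplx_re_im(1)[symmetric] ev ..
    also have "\<dots> = p *\<^sub>R a - q *\<^sub>R b"
      by (simp add: Finite_Cartesian_Product.vec_eq_iff a_def b_def p_def q_def)
    finally show ?thesis .
  qed
  have Lb: "L *v b = q *\<^sub>R a + p *\<^sub>R b"
  proof -
    have "L *v b = (\<chi> i. Im ((l *s v) $ i))" unfolding b_def cplx_re_im(2)[symmetric] ev ..
    also have "\<dots> = q *\<^sub>R a + p *\<^sub>R b"
      by (simp add: Finite_Cartesian_Product.vec_eq_iff a_def b_def p_def q_def algebra_simps)
    finally show ?thesis .
  qed
  have ab0: "a \<noteq> 0 \<or> b \<noteq> 0"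
  proof (rule ccontr)
    assume "\<not> (a \<noteq> 0 \<or> b \<noteq> 0)"
    hence "v $ i = 0" for i
      unfolding a_def b_def
      by (auto simp: Finite_Cartesian_Product.vec_eq_iff complex_eq_iff)
    hence "v = 0" by (simp add: Finite_Cartesian_Product.vec_eq_iff)
    with v0 show False ..
  qed
  define wa where "wa = P2 *v a"
  define wb where "wb = P2 *v b"
  define ua where "ua = Q2 *v a"
  define ub where "ub = Q2 *v b"
  define za where "za = p *\<^sub>R wa - q *\<^sub>R wb"
  define zb where "zb = q *\<^sub>R wa + p *\<^sub>R wb"
  have Fv: "F *v y = c *\<^sub>R (P1 *v (P2 *v y))" for y
    unfolding Fd by (simp add: scaleR_matrix_vector_assoc[symmetric] matrix_vector_mul_assoc)
  have Gv: "G *v y = c *\<^sub>R (Q1 *v (Q2 *v y))" for y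
    unfolding Gd by (simp add: scaleR_matrix_vector_assoc[symmetric] matrix_vector_mul_assoc)
  have GFa: "G *v a = F *v (L *v a)" by (simp add: matrix_vector_mul_assoc FL)
  have GFb: "G *v b = F *v (L *v b)" by (simp add: matrix_vector_mul_assoc FL)
  have Ea: "Q1 *v ua = P1 *v za"
  proof -
    have "c *\<^sub>R (Q1 *v ua) = c *\<^sub>R (P1 *v za)"
      using GFa unfolding Gv Fv La ua_def za_def wa_def wb_def
      by (simp add: matrix_vector_mult_diff_distrib matrix_vector_mult_scaleR)
    thus ?thesis using c0 by simp
  qed
  have Eb: "Q1 *v ub = P1 *v zb"
  proof -
    have "c *\<^sub>R (Q1 *v ub) = c *\<^sub>R (P1 *v zb)"
      using GFb unfolding Gv Fv Lb ub_def zb_def wa_def wb_def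
      by (simp add: matrix_vector_right_distrib matrix_vector_mult_scaleR)
    thus ?thesis using c0 by simp
  qed
  have za: "za \<bullet> za = ua \<bullet> ua"
    by (rule cayley[OF skT, of w]) (use w Ea in \<open>simp_all add: P1_def Q1_def mat_act\<close>)
  have zb: "zb \<bullet> zb = ub \<bullet> ub"
    by (rule cayley[OF skT, of w]) (use w Eb in \<open>simp_all add: P1_def Q1_def mat_act\<close>)
  have ua: "ua \<bullet> ua \<le> r * (wa \<bullet> wa)"
    unfolding ua_def wa_def Q2_def P2_def r_def by (rule D_factor(1)[OF diag bd L2 w])
  have ub: "ub \<bullet> ub \<le> r * (wb \<bullet> wb)"
    unfolding ub_def wb_def Q2_def P2_def r_def by (rule D_factor(1)[OF diag bd L2 w])
  have wa: "(w + 1)\<^sup>2 * (a \<bullet> a) \<le> wa \<bullet> wa"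
    unfolding wa_def P2_def by (rule D_factor(2)[OF diag bd L2 w])
  have wb: "(w + 1)\<^sup>2 * (b \<bullet> b) \<le> wb \<bullet> wb"
    unfolding wb_def P2_def by (rule D_factor(2)[OF diag bd L2 w])
  have "a \<bullet> a + b \<bullet> b > 0" using ab0
    by (metis add_nonneg_pos add_pos_nonneg inner_gt_zero_iff inner_ge_zero)
  hence Wpos: "wa \<bullet> wa + wb \<bullet> wb > 0" using wa wb w
    by (smt (verit, best) distrib_left mult_pos_pos zero_less_power)
  have "(p\<^sup>2 + q\<^sup>2) * (wa \<bullet> wa + wb \<bullet> wb) = ua \<bullet> ua + ub \<bullet> ub"
    using inner_rot[of p wa q wb] za zb unfolding za_def zb_def by simp
  also have "\<dots> \<le> r * (wa \<bullet> wa + wb \<bullet> wb)" using ua ub by (simp add: distrib_left)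
  finally have "p\<^sup>2 + q\<^sup>2 \<le> r" using Wpos by simp
  hence "sqrt (p\<^sup>2 + q\<^sup>2) \<le> sqrt r" by simp
  thus ?thesis unfolding r_def p_def q_def cmod_def .
qed

theorem theorem1:
  fixes T D :: "real^'n^'n" and f :: "real^('n+'n)"
  assumes T_sym: "transpose T = T"
    and T_pd: "\<And>x. x \<noteq> 0 \<Longrightarrow> x \<bullet> (T *v x) > 0"
    and D_diag: "\<And>i j. i \<noteq> j \<Longrightarrow> D$i$j = 0"
    and D_nonneg: "\<And>i. D$i$i \<ge> 0"
  defines "lmax \<equiv> Max {D$i$i | i. True}"
  shows "bigR T D = bigT T + bigD D
    \<and> (\<exists>!xs. bigR T D *v xs = f)
    \<and> (\<forall>\<omega> (x :: nat \<Rightarrow> real^('n+'n)) (xh :: nat \<Rightarrow> real^('n+'n)).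
           \<omega> > 0 \<longrightarrow>
           (\<forall>k. (\<omega> *\<^sub>R mat 1 + bigT T) *v xh k = (\<omega> *\<^sub>R mat 1 - bigD D) *v x k + f) \<longrightarrow>
           (\<forall>k. (\<omega> *\<^sub>R mat 1 + bigD D) *v x (Suc k) = (\<omega> *\<^sub>R mat 1 - bigT T) *v xh k + f) \<longrightarrow>
           x \<longlonglongrightarrow> (THE xs. bigR T D *v xs = f))
    \<and> (\<forall>\<omega>. \<omega> > 0 \<longrightarrow>
           spectral_radius (bigL \<omega> T D) \<le> sqrt (((\<omega> - 1)\<^sup>2 + lmax\<^sup>2) / ((\<omega> + 1)\<^sup>2 + lmax\<^sup>2))
         \<and> sqrt (((\<omega> - 1)\<^sup>2 + lmax\<^sup>2) / ((\<omega> + 1)\<^sup>2 + lmax\<^sup>2)) < 1)"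
proof -
  have fin: "finite {D$i$i | i. True}"
  proof -
    have "{D$i$i | i. True} = (\<lambda>i. D$i$i) ` UNIV" by auto
    thus ?thesis by simp
  qed
  have le: "D$a$a \<le> lmax" for a unfolding lmax_def by (rule Max_ge[OF fin]) auto
  have bd: "(D$a$a)\<^sup>2 \<le> lmax\<^sup>2" for a using le[of a] D_nonneg[of a] by (intro power_mono) auto
  have L2: "lmax\<^sup>2 \<ge> 0" by simp
  have skR: "skew (block2 0 (T - D) (D - T) 0)" by (rule KR_skew[OF T_sym D_diag])
  have iR: "invertible (bigR T D)"
    using skew_invertible[OF skR, of 1] unfolding bigR_eq by simp
  have ex1: "\<exists>!xs. bigR T D *v xs = f"
  proof
    show "bigR T D *v (matrix_inv (bigR T D) *v f) = f"
      by (simp add: matrix_vector_mul_assoc matrix_inv_right'[OF iR])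
  next
    fix y assume "bigR T D *v y = f"
    moreover have "bigR T D *v (matrix_inv (bigR T D) *v f) = f"
      by (simp add: matrix_vector_mul_assoc matrix_inv_right'[OF iR])
    ultimately show "y = matrix_inv (bigR T D) *v f"
      using inj_matrix_vector_mult[OF iR] unfolding inj_def by metis
  qed
  have sol: "bigR T D *v (THE xs. bigR T D *v xs = f) = f" by (rule theI'[OF ex1])
  show ?thesis
  proof (intro conjI allI impI)
    show "bigR T D = bigT T + bigD D" by (rule bigR_split)
    show "\<exists>!xs. bigR T D *v xs = f" by (rule ex1)
  next
    fix \<omega> :: real and x xh :: "nat \<Rightarrow> real^('n+'n)"
    assume "\<omega> > 0"
      "\<forall>k. (\<omega> *\<^sub>R mat 1 + bigT T) *v xh k = (\<omega> *\<^sub>R mat 1 - bigD D) *v x k + f"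
      "\<forall>k. (\<omega> *\<^sub>R mat 1 + bigD D) *v x (Suc k) = (\<omega> *\<^sub>R mat 1 - bigT T) *v xh k + f"
    thus "x \<longlonglongrightarrow> (THE xs. bigR T D *v xs = f)"
      by (intro iter_conv[OF T_sym D_diag bd L2 _ sol])
  next
    fix \<omega> :: real assume w: "\<omega> > 0"
    show "sqrt (((\<omega> - 1)\<^sup>2 + lmax\<^sup>2) / ((\<omega> + 1)\<^sup>2 + lmax\<^sup>2)) < 1"
      by (rule sigma_lt1[OF w L2])
    have fe: "finite (eigenvalues (bigL \<omega> T D))" "eigenvalues (bigL \<omega> T D) \<noteq> {}"
      using eigenvalues_fin_ne by auto
    show "spectral_radius (bigL \<omega> T D) \<le> sqrt (((\<omega> - 1)\<^sup>2 + lmax\<^sup>2) / ((\<omega> + 1)\<^sup>2 + lmax\<^sup>2))"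
      unfolding spectral_radius_def using fe
      by (subst Max_le_iff) (auto intro: spec_bound[OF T_sym D_diag bd L2 w])
  qed
qed
end
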